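(* Let $0<\alpha<\delta$. Consider the birth–death continuous-time Markov chain on $\mathbb{Z}_{\ge0}$ in which, for $n\ge1$, $n\to n+1$ at rate $\alpha n$ and $n\to n-1$ at rate $\delta n$. For $n\ge1$ let $T_n$ be the first hitting time of $0$ starting from $n$. Then for all $n\ge1$, $$\frac{\ln(n+1)}{\delta}\le\mathbb{E}[T_n]\le\frac{1+\ln n}{\delta-\alpha}.$$ *)

theory Defs
  imports "HOL-Probability.Probability"
begin

text \<open>Explicit construction of the birth-death chain (rates: n to n+1 at alpha*n,
  n to n-1 at delta*n, 0 absorbing) via its jump chain and exponential holding times.
  A sample point omega assigns to each step k a pair (b_k, E_k) of independent random
  variables: b_k is a coin with P(True) = alpha/(alpha+delta) (True = birth), and
  E_k is Exp(1)-distributed; the holding time in state m > 0 is E_k / ((alpha+delta) m),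
  i.e. Exp((alpha+delta) m)-distributed.\<close>

definition bd_step :: "nat \<Rightarrow> bool \<Rightarrow> nat" where
  "bd_step m b = (if m = 0 then 0 else if b then m + 1 else m - 1)"

primrec bd_jump_chain :: "nat \<Rightarrow> (nat \<Rightarrow> bool \<times> real) \<Rightarrow> nat \<Rightarrow> nat" where
  "bd_jump_chain n \<omega> 0 = n"
| "bd_jump_chain n \<omega> (Suc k) = bd_step (bd_jump_chain n \<omega> k) (fst (\<omega> k))"

definition bd_space :: "real \<Rightarrow> real \<Rightarrow> (nat \<Rightarrow> bool \<times> real) measure" where
  "bd_space \<alpha> \<delta> = PiM UNIV (\<lambda>_. measure_pmf (bernoulli_pmf (\<alpha> / (\<alpha> + \<delta>)))
                                  \<Otimes>\<^sub>M density lborel (exponential_density 1))"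

definition bd_hitting_time :: "real \<Rightarrow> real \<Rightarrow> nat \<Rightarrow> (nat \<Rightarrow> bool \<times> real) \<Rightarrow> ennreal" where
  "bd_hitting_time \<alpha> \<delta> n \<omega> =
     (\<Sum>k. ennreal (if bd_jump_chain n \<omega> k \<noteq> 0
                     then snd (\<omega> k) / ((\<alpha> + \<delta>) * real (bd_jump_chain n \<omega> k)) else 0))"

definition bd_expected_hitting_time :: "real \<Rightarrow> real \<Rightarrow> nat \<Rightarrow> ennreal" where
  "bd_expected_hitting_time \<alpha> \<delta> n = (\<integral>\<^sup>+ \<omega>. bd_hitting_time \<alpha> \<delta> n \<omega> \<partial>bd_space \<alpha> \<delta>)"

end

theory Submission
  imports Defs "HOL-Analysis.Harmonic_Numbers"
begin


definition bdM :: "real \<Rightarrow> real \<Rightarrow> (bool \<times> real) measure" where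
  "bdM \<alpha> \<delta> = measure_pmf (bernoulli_pmf (\<alpha> / (\<alpha> + \<delta>))) \<Otimes>\<^sub>M density lborel (exponential_density 1)"

lemma bd_space_eq: "bd_space \<alpha> \<delta> = PiM UNIV (\<lambda>_. bdM \<alpha> \<delta>)"
  by (simp add: bd_space_def bdM_def)

lemma prob_bdM: "prob_space (bdM \<alpha> \<delta>)"
proof -
  interpret D: prob_space "density lborel (exponential_density 1)"
    by (rule prob_space_exponential_density) simp
  interpret P: pair_prob_space "measure_pmf (bernoulli_pmf (\<alpha> / (\<alpha> + \<delta>)))" "density lborel (exponential_density 1)"
    by unfold_locales
  show ?thesis unfolding bdM_def by (rule P.prob_space_axioms)
qed

lemma iter_integral:
  assumes "prob_space M" and [measurable]: "f \<in> borel_measurable (PiM UNIV (\<lambda>_::nat. M))"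
  shows "(\<integral>\<^sup>+\<omega>. f \<omega> \<partial>PiM UNIV (\<lambda>_::nat. M)) = (\<integral>\<^sup>+x. \<integral>\<^sup>+\<omega>. f (case_nat x \<omega>) \<partial>PiM UNIV (\<lambda>_::nat. M) \<partial>M)"
proof -
  interpret S: sequence_space M
    using assms(1) by (simp add: sequence_space_def product_prob_space_def product_prob_space_axioms_def product_sigma_finite_def prob_space_imp_sigma_finite)
  interpret P: pair_sigma_finite M S.S ..
  have SF: "sigma_finite_measure S.S"
    by (rule prob_space_imp_sigma_finite, rule prob_space_PiM) (use assms(1) in auto)
  have "(\<integral>\<^sup>+\<omega>. f \<omega> \<partial>S.S) = (\<integral>\<^sup>+X. f ((\<lambda>(s, \<omega>). case_nat s \<omega>) X) \<partial>(M \<Otimes>\<^sub>M S.S))"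
    by (subst S.PiM_iter[symmetric]) (simp add: nn_integral_distr)
  also have "\<dots> = (\<integral>\<^sup>+x. \<integral>\<^sup>+\<omega>. f ((\<lambda>(s, \<omega>). case_nat s \<omega>) (x, \<omega>)) \<partial>S.S \<partial>M)"
  proof (rule sigma_finite_measure.nn_integral_fst[OF SF, symmetric])
    have m: "(\<lambda>(s, \<omega>). case_nat s \<omega>) \<in> measurable (M \<Otimes>\<^sub>M S.S) S.S"
      by measurable
    show "(\<lambda>X. f ((\<lambda>(s, \<omega>). case_nat s \<omega>) X)) \<in> borel_measurable (M \<Otimes>\<^sub>M S.S)"
      by (rule measurable_compose[OF m assms(2)])
  qed
  also have "\<dots> = (\<integral>\<^sup>+x. \<integral>\<^sup>+\<omega>. f (case_nat x \<omega>) \<partial>S.S \<partial>M)"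
    by simp
  finally show ?thesis .
qed

lemma chain_meas[measurable]:
  "(\<lambda>\<omega>. bd_jump_chain n \<omega> k) \<in> measurable (PiM UNIV (\<lambda>_::nat. bdM \<alpha> \<delta>)) (count_space UNIV)"
proof (induction k)
  case 0 then show ?case by simp
next
  case (Suc k)
  have [measurable]: "(\<lambda>\<omega>. fst (\<omega> k)) \<in> measurable (PiM UNIV (\<lambda>_::nat. bdM \<alpha> \<delta>)) (count_space UNIV)"
    unfolding bdM_def by measurable
  show ?case using Suc by simp measurable
qed

definition bd_term :: "real \<Rightarrow> real \<Rightarrow> nat \<Rightarrow> (nat \<Rightarrow> bool \<times> real) \<Rightarrow> nat \<Rightarrow> ennreal" where
  "bd_term \<alpha> \<delta> n \<omega> k = ennreal (if bd_jump_chain n \<omega> k \<noteq> 0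
                     then snd (\<omega> k) / ((\<alpha> + \<delta>) * real (bd_jump_chain n \<omega> k)) else 0)"

definition TK :: "real \<Rightarrow> real \<Rightarrow> nat \<Rightarrow> nat \<Rightarrow> (nat \<Rightarrow> bool \<times> real) \<Rightarrow> ennreal" where
  "TK \<alpha> \<delta> K n \<omega> = (\<Sum>k<K. bd_term \<alpha> \<delta> n \<omega> k)"

lemma term_meas[measurable]:
  "(\<lambda>\<omega>. bd_term \<alpha> \<delta> n \<omega> k) \<in> borel_measurable (PiM UNIV (\<lambda>_::nat. bdM \<alpha> \<delta>))"
proof -
  have [measurable]: "(\<lambda>\<omega>. snd (\<omega> k)) \<in> borel_measurable (PiM UNIV (\<lambda>_::nat. bdM \<alpha> \<delta>))"
    unfolding bdM_def by measurable
  show ?thesis unfolding bd_term_def by measurable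
qed

lemma TK_meas[measurable]:
  "(\<lambda>\<omega>. TK \<alpha> \<delta> K n \<omega>) \<in> borel_measurable (PiM UNIV (\<lambda>_::nat. bdM \<alpha> \<delta>))"
  unfolding TK_def by measurable

lemma chain_case_nat:
  "bd_jump_chain n (case_nat x \<omega>) (Suc k) = bd_jump_chain (bd_step n (fst x)) \<omega> k"
  by (induction k) auto

lemma term_case_nat:
  "bd_term \<alpha> \<delta> n (case_nat x \<omega>) (Suc k) = bd_term \<alpha> \<delta> (bd_step n (fst x)) \<omega> k"
  unfolding bd_term_def chain_case_nat by simp

lemma TK_Suc_case_nat:
  "TK \<alpha> \<delta> (Suc K) n (case_nat x \<omega>) =
     ennreal (if n \<noteq> 0 then snd x / ((\<alpha> + \<delta>) * real n) else 0) + TK \<alpha> \<delta> K (bd_step n (fst x)) \<omega>"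
  unfolding TK_def by (subst sum.lessThan_Suc_shift) (simp only: term_case_nat, simp add: bd_term_def)

fun hK :: "real \<Rightarrow> real \<Rightarrow> nat \<Rightarrow> nat \<Rightarrow> real" where
  "hK \<alpha> \<delta> 0 m = 0"
| "hK \<alpha> \<delta> (Suc K) m = (if m = 0 then 0 else 1 / ((\<alpha> + \<delta>) * real m)
      + \<alpha> / (\<alpha> + \<delta>) * hK \<alpha> \<delta> K (m + 1) + \<delta> / (\<alpha> + \<delta>) * hK \<alpha> \<delta> K (m - 1))"

lemma hK_nonneg: "0 < \<alpha> \<Longrightarrow> 0 < \<delta> \<Longrightarrow> 0 \<le> hK \<alpha> \<delta> K m"
  by (induction K arbitrary: m) auto

lemma hK_zero: "hK \<alpha> \<delta> K 0 = 0"
  by (cases K) auto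

lemma exp_mean: "(\<integral>\<^sup>+e. ennreal e \<partial>density lborel (exponential_density 1)) = 1"
proof -
  have "(\<integral>\<^sup>+e. ennreal e \<partial>density lborel (exponential_density 1))
      = (\<integral>\<^sup>+e. ennreal (exponential_density 1 e * e ^ 1) \<partial>lborel)"
    by (subst nn_integral_density)
       (auto intro!: nn_integral_cong simp: ennreal_mult'[symmetric] exponential_density_def)
  also have "\<dots> = 1"
    by (subst nn_integral_erlang_ith_moment) auto
  finally show ?thesis .
qed

lemma TK_integral:
  assumes a: "0 < \<alpha>" and d: "0 < \<delta>"
  shows "(\<integral>\<^sup>+\<omega>. TK \<alpha> \<delta> K n \<omega> \<partial>PiM UNIV (\<lambda>_::nat. bdM \<alpha> \<delta>)) = ennreal (hK \<alpha> \<delta> K n)"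
proof (induction K arbitrary: n)
  case 0
  then show ?case by (simp add: TK_def)
next
  case (Suc K)
  let ?S = "PiM UNIV (\<lambda>_::nat. bdM \<alpha> \<delta>)"
  let ?p = "\<alpha> / (\<alpha> + \<delta>)"
  let ?B = "measure_pmf (bernoulli_pmf ?p)"
  let ?D = "density lborel (exponential_density 1)"
  let ?c = "\<lambda>y. ennreal (if n \<noteq> 0 then y / ((\<alpha> + \<delta>) * real n) else 0)"
  interpret S: prob_space ?S
    by (rule prob_space_PiM) (rule prob_bdM)
  interpret D: prob_space ?D
    by (rule prob_space_exponential_density) simp
  interpret P: pair_prob_space ?B ?D
    by unfold_locales
  have D1: "emeasure ?D UNIV = 1" using D.emeasure_space_1 by simp
  have "(\<integral>\<^sup>+\<omega>. TK \<alpha> \<delta> (Suc K) n \<omega> \<partial>?S)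
      = (\<integral>\<^sup>+x. \<integral>\<^sup>+\<omega>. TK \<alpha> \<delta> (Suc K) n (case_nat x \<omega>) \<partial>?S \<partial>bdM \<alpha> \<delta>)"
    by (rule iter_integral[OF prob_bdM]) measurable
  also have "\<dots> = (\<integral>\<^sup>+x. ?c (snd x) + ennreal (hK \<alpha> \<delta> K (bd_step n (fst x))) \<partial>bdM \<alpha> \<delta>)"
    apply (rule nn_integral_cong)
    apply (simp only: TK_Suc_case_nat)
    apply (subst nn_integral_add)
      apply measurable
    apply (simp add: Suc.IH S.emeasure_space_1)
    done
  also have "\<dots> = (\<integral>\<^sup>+x. ?c (snd x) \<partial>bdM \<alpha> \<delta>) + (\<integral>\<^sup>+x. ennreal (hK \<alpha> \<delta> K (bd_step n (fst x))) \<partial>bdM \<alpha> \<delta>)"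
    by (rule nn_integral_add) (simp_all add: bdM_def)
  also have "(\<integral>\<^sup>+x. ?c (snd x) \<partial>bdM \<alpha> \<delta>) = (\<integral>\<^sup>+y. ?c y \<partial>?D)"
    unfolding bdM_def
    apply (subst P.nn_integral_snd[symmetric])
     apply measurable
    apply (rule nn_integral_cong)
    apply (simp add: measure_pmf.emeasure_space_1)
    done
  also have "(\<integral>\<^sup>+y. ?c y \<partial>?D) = ennreal (if n \<noteq> 0 then 1 / ((\<alpha> + \<delta>) * real n) else 0)"
  proof (cases "n = 0")
    case False
    have "(\<integral>\<^sup>+y. ?c y \<partial>?D) = (\<integral>\<^sup>+y. ennreal (1 / ((\<alpha> + \<delta>) * real n)) * ennreal y \<partial>?D)"
      using False a d by (intro nn_integral_cong) (simp add: ennreal_mult'[symmetric])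
    also have "\<dots> = ennreal (1 / ((\<alpha> + \<delta>) * real n))"
      by (subst nn_integral_cmult) (simp_all add: exp_mean)
    finally show ?thesis using False by simp
  qed simp
  also have "(\<integral>\<^sup>+x. ennreal (hK \<alpha> \<delta> K (bd_step n (fst x))) \<partial>bdM \<alpha> \<delta>)
      = (\<integral>\<^sup>+b. ennreal (hK \<alpha> \<delta> K (bd_step n b)) \<partial>?B)"
    unfolding bdM_def
    by (subst D.nn_integral_fst[symmetric]) (simp_all add: D1)
  also have "\<dots> = ennreal (hK \<alpha> \<delta> K (bd_step n True)) * ?p + ennreal (hK \<alpha> \<delta> K (bd_step n False)) * (1 - ?p)"
    using a d by (subst nn_integral_bernoulli_pmf) auto
  also have "ennreal (if n \<noteq> 0 then 1 / ((\<alpha> + \<delta>) * real n) else 0) + (ennreal (hK \<alpha> \<delta> K (bd_step n True)) * ?p + ennreal (hK \<alpha> \<delta> K (bd_step n False)) * (1 - ?p))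
      = ennreal (hK \<alpha> \<delta> (Suc K) n)"
  proof (cases "n = 0")
    case True
    then show ?thesis by (simp add: bd_step_def hK_zero)
  next
    case False
    have q: "1 - ?p = \<delta> / (\<alpha> + \<delta>)" using a d by (simp add: field_simps)
    show ?thesis using False a d hK_nonneg[OF a d]
      by (simp add: bd_step_def q ennreal_plus[symmetric] ennreal_mult[symmetric] mult.commute del: ennreal_plus)
  qed
  finally show ?case .
qed

lemma expected_SUP:
  assumes a: "0 < \<alpha>" and d: "0 < \<delta>"
  shows "bd_expected_hitting_time \<alpha> \<delta> n = (SUP K. ennreal (hK \<alpha> \<delta> K n))"
proof -
  have eq: "bd_hitting_time \<alpha> \<delta> n \<omega> = (SUP K. TK \<alpha> \<delta> K n \<omega>)" for \<omega>
    unfolding bd_hitting_time_def TK_def bd_term_def[symmetric] by (rule suminf_eq_SUP)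
  have inc: "incseq (\<lambda>K \<omega>. TK \<alpha> \<delta> K n \<omega>)"
    by (intro incseq_SucI le_funI) (simp add: TK_def)
  have "bd_expected_hitting_time \<alpha> \<delta> n = (\<integral>\<^sup>+\<omega>. (SUP K. TK \<alpha> \<delta> K n \<omega>) \<partial>PiM UNIV (\<lambda>_::nat. bdM \<alpha> \<delta>))"
    unfolding bd_expected_hitting_time_def bd_space_eq eq ..
  also have "\<dots> = (SUP K. (\<integral>\<^sup>+\<omega>. TK \<alpha> \<delta> K n \<omega> \<partial>PiM UNIV (\<lambda>_::nat. bdM \<alpha> \<delta>)))"
    by (rule nn_integral_monotone_convergence_SUP[OF inc]) measurable
  also have "\<dots> = (SUP K. ennreal (hK \<alpha> \<delta> K n))"
    by (simp add: TK_integral[OF a d])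
  finally show ?thesis .
qed



lemma hK_upper:
  assumes a: "0 < \<alpha>" and ad: "\<alpha> < \<delta>"
  shows "hK \<alpha> \<delta> K m \<le> harm m / (\<delta> - \<alpha>)"
proof (induction K arbitrary: m)
  case 0
  then show ?case using ad by (simp add: harm_nonneg)
next
  case (Suc K)
  show ?case
  proof (cases m)
    case 0 then show ?thesis using ad by (simp add: harm_nonneg)
  next
    case (Suc j)
    define u where "u = real j + 1"
    define x where "x = (harm (Suc j) :: real)"
    have u: "u > 0" by (simp add: u_def)
    have d: "0 < \<delta>" using a ad by simp
    have h2: "harm (Suc (Suc j)) = x + 1 / (u + 1)"
      by (simp add: x_def u_def harm_Suc field_simps)
    have h0: "harm j = x - 1 / u"
      by (simp add: x_def u_def harm_Suc inverse_eq_divide add.commute)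
    have IH1: "hK \<alpha> \<delta> K (Suc (Suc j)) \<le> (x + 1 / (u + 1)) / (\<delta> - \<alpha>)"
      using Suc.IH[of "Suc (Suc j)"] h2 by simp
    have IH2: "hK \<alpha> \<delta> K j \<le> (x - 1 / u) / (\<delta> - \<alpha>)"
      using Suc.IH[of j] h0 by simp
    have pa: "0 \<le> \<alpha> / (\<alpha> + \<delta>)" "0 \<le> \<delta> / (\<alpha> + \<delta>)" using a d by auto
    have "hK \<alpha> \<delta> (Suc K) m = 1 / ((\<alpha> + \<delta>) * u) + \<alpha> / (\<alpha> + \<delta>) * hK \<alpha> \<delta> K (Suc (Suc j))
          + \<delta> / (\<alpha> + \<delta>) * hK \<alpha> \<delta> K j"
      using Suc by (simp add: u_def add.commute)
    also have "\<dots> \<le> 1 / ((\<alpha> + \<delta>) * u) + \<alpha> / (\<alpha> + \<delta>) * ((x + 1 / (u + 1)) / (\<delta> - \<alpha>))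
          + \<delta> / (\<alpha> + \<delta>) * ((x - 1 / u) / (\<delta> - \<alpha>))"
      by (intro add_mono mult_left_mono IH1 IH2 pa order_refl)
    also have "\<dots> \<le> x / (\<delta> - \<alpha>)"
    proof -
      define A where "A = \<alpha> + \<delta>"
      define B where "B = \<delta> - \<alpha>"
      have A: "A > 0" and B: "B > 0" using a ad by (auto simp: A_def B_def)
      have u1: "u + 1 \<noteq> 0" "1 + u \<noteq> 0" using u by auto
      have fr: "\<alpha> / (u + 1) \<le> \<alpha> / u" using a u by (intro divide_left_mono) auto
      have inner: "B / u + \<alpha> * (x + 1 / (u + 1)) + \<delta> * (x - 1 / u) \<le> A * x"
        using fr unfolding A_def B_def by (simp add: algebra_simps diff_divide_distrib)
      have eq: "1 / (A * u) + \<alpha> / A * ((x + 1 / (u + 1)) / B) + \<delta> / A * ((x - 1 / u) / B)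
           = (B / u + \<alpha> * (x + 1 / (u + 1)) + \<delta> * (x - 1 / u)) / (A * B)"
      proof -
        have "(B / u) / (A * B) = 1 / (A * u)" using B by simp
        moreover have "\<alpha> * y / (A * B) = \<alpha> / A * (y / B)" for y by simp
        moreover have "\<delta> * y / (A * B) = \<delta> / A * (y / B)" for y by simp
        ultimately show ?thesis by (simp only: add_divide_distrib)
      qed
      have "(B / u + \<alpha> * (x + 1 / (u + 1)) + \<delta> * (x - 1 / u)) / (A * B) \<le> (A * x) / (A * B)"
        using inner A B by (intro divide_right_mono) auto
      also have "\<dots> = x / B" using A by simp
      finally show ?thesis using eq unfolding A_def B_def by simp
    qed
    finally show ?thesis by (simp add: Suc x_def)
  qed
qed

lemma harm_le_ln: "harm n \<le> 1 + ln (real n)" if n1: "1 \<le> n"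
proof -
  obtain k where k: "n = Suc k" using n1 by (cases n) auto
  have "harm (Suc k) - ln (real (Suc k)) \<le> harm (Suc 0) - ln (real (Suc 0))"
    using decseq_harm_diff_ln unfolding decseq_def by (metis zero_le)
  then show ?thesis using k by (simp add: harm_Suc harm_expand)
qed

definition Pop :: "real \<Rightarrow> real \<Rightarrow> (nat \<Rightarrow> real) \<Rightarrow> nat \<Rightarrow> real" where
  "Pop \<alpha> \<delta> \<phi> m = (if m = 0 then \<phi> 0 else \<alpha> / (\<alpha> + \<delta>) * \<phi> (m + 1) + \<delta> / (\<alpha> + \<delta>) * \<phi> (m - 1))"

fun Pit :: "real \<Rightarrow> real \<Rightarrow> nat \<Rightarrow> (nat \<Rightarrow> real) \<Rightarrow> nat \<Rightarrow> real" where
  "Pit \<alpha> \<delta> 0 \<phi> = \<phi>"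
| "Pit \<alpha> \<delta> (Suc K) \<phi> = Pop \<alpha> \<delta> (Pit \<alpha> \<delta> K \<phi>)"

lemma Pop_mono:
  assumes "0 < \<alpha>" "0 < \<delta>" "\<And>m. \<phi> m \<le> \<psi> m"
  shows "Pop \<alpha> \<delta> \<phi> m \<le> Pop \<alpha> \<delta> \<psi> m"
proof -
  have h: "0 \<le> \<alpha> / (\<alpha> + \<delta>)" "0 \<le> \<delta> / (\<alpha> + \<delta>)" using assms(1,2) by auto
  show ?thesis
    unfolding Pop_def using assms(3) add_mono[OF mult_left_mono[OF assms(3) h(1)] mult_left_mono[OF assms(3) h(2)]]
    by simp
qed

lemma Pop_add: "Pop \<alpha> \<delta> (\<lambda>m. \<phi> m + \<psi> m) m = Pop \<alpha> \<delta> \<phi> m + Pop \<alpha> \<delta> \<psi> m"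
  unfolding Pop_def by (simp add: algebra_simps)

lemma Pop_cmult: "Pop \<alpha> \<delta> (\<lambda>m. c * \<phi> m) m = c * Pop \<alpha> \<delta> \<phi> m"
  unfolding Pop_def by (simp add: algebra_simps)

lemma Pit_mono:
  assumes "0 < \<alpha>" "0 < \<delta>" "\<And>m. \<phi> m \<le> \<psi> m"
  shows "Pit \<alpha> \<delta> K \<phi> m \<le> Pit \<alpha> \<delta> K \<psi> m"
  using assms by (induction K arbitrary: m) (auto intro!: Pop_mono)

lemma Pit_cmult: "Pit \<alpha> \<delta> K (\<lambda>m. c * \<phi> m) = (\<lambda>m. c * Pit \<alpha> \<delta> K \<phi> m)"
  by (induction K) (auto simp: Pop_cmult)

lemma hK_Pop: "hK \<alpha> \<delta> (Suc K) m = (if m = 0 then 0 else 1 / ((\<alpha> + \<delta>) * real m)) + Pop \<alpha> \<delta> (hK \<alpha> \<delta> K) m"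
  by (simp add: Pop_def hK_zero)

lemma sub_sol:
  assumes a: "0 < \<alpha>" and d: "0 < \<delta>"
  shows "ln (real m + 1) / \<delta> \<le> (if m = 0 then 0 else 1 / ((\<alpha> + \<delta>) * real m)) + Pop \<alpha> \<delta> (\<lambda>m. ln (real m + 1) / \<delta>) m"
proof (cases m)
  case 0 then show ?thesis by (simp add: Pop_def)
next
  case (Suc j)
  define u where "u = real j + 1"
  have u: "u > 0" by (simp add: u_def)
  have lnd: "ln (u + 1) - ln u \<le> 1 / u"
  proof -
    have "ln ((u + 1) / u) \<le> (u + 1) / u - 1" using u by (intro ln_le_minus_one) auto
    also have "\<dots> = 1 / u" using u by (simp add: field_simps)
    finally show ?thesis using u by (simp add: ln_div)
  qed
  have mono: "ln (u + 1) \<le> ln (u + 2)" using u by simp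
  have s1: "\<alpha> / (\<alpha> + \<delta>) + \<delta> / (\<alpha> + \<delta>) = 1" using a d by (simp add: add_divide_distrib[symmetric])
  have "ln (u + 1) / \<delta> = \<alpha> / (\<alpha> + \<delta>) * (ln (u + 1) / \<delta>) + \<delta> / (\<alpha> + \<delta>) * (ln (u + 1) / \<delta>)"
    by (simp only: distrib_right[symmetric] s1 mult_1)
  also have "\<dots> \<le> \<alpha> / (\<alpha> + \<delta>) * (ln (u + 2) / \<delta>) + \<delta> / (\<alpha> + \<delta>) * ((ln u + 1 / u) / \<delta>)"
    using a d mono lnd by (intro add_mono mult_left_mono divide_right_mono) auto
  also have "\<dots> = 1 / ((\<alpha> + \<delta>) * u) + (\<alpha> / (\<alpha> + \<delta>) * (ln (u + 2) / \<delta>) + \<delta> / (\<alpha> + \<delta>) * (ln u / \<delta>))"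
  proof -
    have "\<delta> / (\<alpha> + \<delta>) * ((ln u + 1 / u) / \<delta>) = \<delta> / (\<alpha> + \<delta>) * (ln u / \<delta>) + 1 / ((\<alpha> + \<delta>) * u)"
      using d by (simp add: add_divide_distrib distrib_left)
    then show ?thesis by simp
  qed
  finally show ?thesis
    using Suc by (simp add: Pop_def u_def add_ac)
qed

lemma lower_iter:
  assumes a: "0 < \<alpha>" and d: "0 < \<delta>"
  shows "ln (real m + 1) / \<delta> \<le> hK \<alpha> \<delta> K m + Pit \<alpha> \<delta> K (\<lambda>m. ln (real m + 1) / \<delta>) m"
proof (induction K arbitrary: m)
  case 0 then show ?case by simp
next
  case (Suc K)
  let ?l = "\<lambda>m. ln (real m + 1) / \<delta>"
  have "?l m \<le> (if m = 0 then 0 else 1 / ((\<alpha> + \<delta>) * real m)) + Pop \<alpha> \<delta> ?l m"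
    by (rule sub_sol[OF a d])
  also have "Pop \<alpha> \<delta> ?l m \<le> Pop \<alpha> \<delta> (\<lambda>m. hK \<alpha> \<delta> K m + Pit \<alpha> \<delta> K ?l m) m"
    by (rule Pop_mono[OF a d Suc.IH])
  also have "\<dots> = Pop \<alpha> \<delta> (hK \<alpha> \<delta> K) m + Pit \<alpha> \<delta> (Suc K) ?l m"
    by (simp add: Pop_add)
  finally show ?case by (simp only: hK_Pop) simp
qed

definition Wf :: "real \<Rightarrow> nat \<Rightarrow> real" where
  "Wf r m = (if m = 0 then 0 else r ^ m)"

lemma Pop_W:
  assumes a: "0 < \<alpha>" and d: "0 < \<delta>" and r: "0 < r"
  shows "Pop \<alpha> \<delta> (Wf r) m \<le> (\<alpha> / (\<alpha> + \<delta>) * r + \<delta> / (\<alpha> + \<delta>) / r) * Wf r m"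
proof (cases m)
  case 0 then show ?thesis by (simp add: Pop_def Wf_def)
next
  case (Suc j)
  have wj: "Wf r j \<le> r ^ j" using r by (simp add: Wf_def)
  have q: "0 \<le> \<delta> / (\<alpha> + \<delta>)" using a d by simp
  have "Pop \<alpha> \<delta> (Wf r) m = \<alpha> / (\<alpha> + \<delta>) * r ^ (Suc (Suc j)) + \<delta> / (\<alpha> + \<delta>) * Wf r j"
    using Suc by (simp add: Pop_def Wf_def)
  also have "\<dots> \<le> \<alpha> / (\<alpha> + \<delta>) * r ^ (Suc (Suc j)) + \<delta> / (\<alpha> + \<delta>) * r ^ j"
    using mult_left_mono[OF wj q] by simp
  also have "\<dots> = \<alpha> / (\<alpha> + \<delta>) * r * r ^ (Suc j) + \<delta> / (\<alpha> + \<delta>) / r * r ^ (Suc j)"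
  proof -
    have e: "\<delta> / (\<alpha> + \<delta>) / r * r ^ (Suc j) = \<delta> / (\<alpha> + \<delta>) * r ^ j" using r by simp
    show ?thesis by (simp only: e) simp
  qed
  also have "\<dots> = (\<alpha> / (\<alpha> + \<delta>) * r + \<delta> / (\<alpha> + \<delta>) / r) * Wf r m"
  proof -
    have "Wf r m = r ^ (Suc j)" using Suc by (simp add: Wf_def)
    then show ?thesis by (simp only: distrib_right)
  qed
  finally show ?thesis .
qed

lemma Pit_W:
  assumes a: "0 < \<alpha>" and d: "0 < \<delta>" and r: "0 < r"
  shows "Pit \<alpha> \<delta> K (Wf r) m \<le> (\<alpha> / (\<alpha> + \<delta>) * r + \<delta> / (\<alpha> + \<delta>) / r) ^ K * Wf r m"
proof (induction K arbitrary: m)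
  case 0 then show ?case by simp
next
  case (Suc K)
  let ?\<rho> = "\<alpha> / (\<alpha> + \<delta>) * r + \<delta> / (\<alpha> + \<delta>) / r"
  have \<rho>: "0 \<le> ?\<rho>" using a d r by simp
  have "Pit \<alpha> \<delta> (Suc K) (Wf r) m \<le> Pop \<alpha> \<delta> (\<lambda>m. ?\<rho> ^ K * Wf r m) m"
    using Pop_mono[OF a d Suc.IH] by simp
  also have "\<dots> = ?\<rho> ^ K * Pop \<alpha> \<delta> (Wf r) m" by (rule Pop_cmult)
  also have "\<dots> \<le> ?\<rho> ^ K * (?\<rho> * Wf r m)"
    using \<rho> by (intro mult_left_mono Pop_W[OF a d r]) auto
  finally show ?case by (simp add: mult_ac)
qed

lemma l_le_W:
  assumes d: "0 < \<delta>" and r: "1 < r"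
  shows "ln (real m + 1) / \<delta> \<le> (1 / (\<delta> * (r - 1))) * Wf r m"
proof (cases "m = 0")
  case True then show ?thesis by (simp add: Wf_def)
next
  case False
  have b: "1 + real m * (r - 1) \<le> (1 + (r - 1)) ^ m"
    using r by (intro Bernoulli_inequality) simp
  have "ln (real m + 1) \<le> real m"
    using ln_add_one_self_le_self[of "real m"] by (simp add: add.commute)
  also have "real m \<le> r ^ m / (r - 1)"
    using b r by (simp add: field_simps)
  finally have "ln (real m + 1) \<le> r ^ m / (r - 1)" .
  then have "ln (real m + 1) / \<delta> \<le> r ^ m / (r - 1) / \<delta>"
    using d by (intro divide_right_mono) auto
  then show ?thesis using False by (simp add: Wf_def mult.commute)
qed

theorem claim5:
  fixes \<alpha> \<delta> :: real and n :: nat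
  assumes "0 < \<alpha>" and "\<alpha> < \<delta>" and "1 \<le> n"
  shows "ennreal (ln (real n + 1) / \<delta>) \<le> bd_expected_hitting_time \<alpha> \<delta> n
       \<and> bd_expected_hitting_time \<alpha> \<delta> n \<le> ennreal ((1 + ln (real n)) / (\<delta> - \<alpha>))"
proof
  have a: "0 < \<alpha>" and d: "0 < \<delta>" and ad: "\<alpha> < \<delta>" using assms by auto
  have E: "bd_expected_hitting_time \<alpha> \<delta> n = (SUP K. ennreal (hK \<alpha> \<delta> K n))"
    by (rule expected_SUP[OF a d])
  show "bd_expected_hitting_time \<alpha> \<delta> n \<le> ennreal ((1 + ln (real n)) / (\<delta> - \<alpha>))"
    unfolding E
  proof (rule SUP_least, rule ennreal_leI)
    fix K
    have "hK \<alpha> \<delta> K n \<le> harm n / (\<delta> - \<alpha>)" by (rule hK_upper[OF a ad])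
    also have "\<dots> \<le> (1 + ln (real n)) / (\<delta> - \<alpha>)"
      using harm_le_ln[OF assms(3)] ad by (intro divide_right_mono) auto
    finally show "hK \<alpha> \<delta> K n \<le> (1 + ln (real n)) / (\<delta> - \<alpha>)" .
  qed
  define r where "r = (\<alpha> + \<delta>) / (2 * \<alpha>)"
  define \<rho> where "\<rho> = \<alpha> / (\<alpha> + \<delta>) * r + \<delta> / (\<alpha> + \<delta>) / r"
  define C where "C = 1 / (\<delta> * (r - 1))"
  let ?l = "\<lambda>m. ln (real m + 1) / \<delta>"
  have r1: "1 < r" using a ad by (simp add: r_def field_simps)
  have \<rho>eq: "\<rho> = 1 / 2 + 2 * \<alpha> * \<delta> / (\<alpha> + \<delta>) ^ 2"
  proof -
    have e1: "\<alpha> / (\<alpha> + \<delta>) * r = 1 / 2" using a d unfolding r_def by simp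
    have e2: "\<delta> / (\<alpha> + \<delta>) / r = 2 * \<alpha> * \<delta> / (\<alpha> + \<delta>) ^ 2"
      using a d unfolding r_def by (simp add: power2_eq_square)
    show ?thesis unfolding \<rho>_def e1 e2 ..
  qed
  have \<rho>0: "0 \<le> \<rho>" using a d r1 unfolding \<rho>_def by simp
  have \<rho>1: "\<rho> < 1"
  proof -
    have "4 * (\<alpha> * \<delta>) < (\<alpha> + \<delta>) ^ 2"
    proof -
      have "0 < (\<delta> - \<alpha>) ^ 2" using ad by simp
      then show ?thesis by (simp add: power2_eq_square algebra_simps)
    qed
    then have "2 * \<alpha> * \<delta> / (\<alpha> + \<delta>) ^ 2 < 1 / 2"
      using a d by (simp add: field_simps)
    then show ?thesis using \<rho>eq by simp
  qed
  have C0: "0 \<le> C" using d r1 by (simp add: C_def)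
  have key: "?l n - C * \<rho> ^ K * Wf r n \<le> hK \<alpha> \<delta> K n" for K
  proof -
    have "Pit \<alpha> \<delta> K ?l n \<le> Pit \<alpha> \<delta> K (\<lambda>m. C * Wf r m) n"
      using l_le_W[OF d r1] unfolding C_def by (intro Pit_mono[OF a d]) auto
    also have "\<dots> = C * Pit \<alpha> \<delta> K (Wf r) n" by (simp add: Pit_cmult)
    also have "\<dots> \<le> C * (\<rho> ^ K * Wf r n)"
      using C0 Pit_W[OF a d, of r K n] r1 unfolding \<rho>_def by (intro mult_left_mono) auto
    finally show ?thesis using lower_iter[OF a d, of n K] by (simp add: mult.assoc)
  qed
  have lim: "(\<lambda>K. ennreal (?l n - C * \<rho> ^ K * Wf r n)) \<longlonglongrightarrow> ennreal (?l n)"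
  proof (rule tendsto_ennrealI)
    have "(\<lambda>K. C * \<rho> ^ K * Wf r n) \<longlonglongrightarrow> C * 0 * Wf r n"
      using \<rho>0 \<rho>1 by (intro tendsto_intros LIMSEQ_power_zero) auto
    then show "(\<lambda>K. ?l n - C * \<rho> ^ K * Wf r n) \<longlonglongrightarrow> ?l n"
      using tendsto_diff[OF tendsto_const[of "?l n"]] by fastforce
  qed
  show "ennreal (?l n) \<le> bd_expected_hitting_time \<alpha> \<delta> n"
    unfolding E
  proof (rule LIMSEQ_le_const2[OF lim])
    show "\<exists>N. \<forall>K\<ge>N. ennreal (?l n - C * \<rho> ^ K * Wf r n) \<le> (SUP K. ennreal (hK \<alpha> \<delta> K n))"
    proof (intro exI allI impI)
      fix K
      have "ennreal (?l n - C * \<rho> ^ K * Wf r n) \<le> ennreal (hK \<alpha> \<delta> K n)"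
        by (rule ennreal_leI[OF key])
      also have "\<dots> \<le> (SUP K. ennreal (hK \<alpha> \<delta> K n))" by (rule SUP_upper) simp
      finally show "ennreal (?l n - C * \<rho> ^ K * Wf r n) \<le> (SUP K. ennreal (hK \<alpha> \<delta> K n))" .
    qed
  qed
qed

end
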